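(* Let $\Gamma$ be an oriented path in $\mathbb C$ which is an interval of a straight line, let $f$ be a polynomial of degree at most $m\in\mathbb Z_+$, and let $g:\Gamma\to\mathbb C$ be a continuous map taking values in a line in $\mathbb C$ passing through $0$, such that $f(z)+g(z)\ne0$ for every $z\in\Gamma$. Then $w(f+g,\Gamma)<\frac{m+1}{2}$.
   Context: An oriented path $\Gamma$ with source $s(\Gamma)$ and end $e(\Gamma)$ is a set $\Gamma=\phi([a,b])$ for a continuous $\phi:[a,b]\to\mathbb C$ with $\phi(a)=s(\Gamma)$, $\phi(b)=e(\Gamma)$, $\phi$ injective on $(a,b)$. For continuous $F:\Gamma\to\mathbb C\setminus\{0\}$, choose such a parametrization $\phi$ and a continuous $\psi:[a,b]\to\mathbb R$ with $F(\phi(t))/|F(\phi(t))|=e^{i\psi(t)}$; the winding number of $F$ along $\Gamma$ is $w(F,\Gamma)=\frac{\psi(b)-\psi(a)}{2\pi}$ (independent of choices). *)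

theory Defs
  imports "HOL-Analysis.Analysis" "HOL-Computational_Algebra.Polynomial"
begin

definition seg_winding :: "(complex \<Rightarrow> complex) \<Rightarrow> complex \<Rightarrow> complex \<Rightarrow> real" where
  "seg_winding F s e =
     (THE w. \<exists>\<psi>::real \<Rightarrow> real. continuous_on {0..1} \<psi> \<and>
        (\<forall>t\<in>{0..1}. F (linepath s e t) / complex_of_real (norm (F (linepath s e t))) = cis (\<psi> t)) \<and>
        w = (\<psi> 1 - \<psi> 0) / (2 * pi))"

end

theory Submission imports Defs begin

lemma sin_shift_int: fixes k :: int shows "sin (x + 2 * pi * of_int k) = sin x"
proof -
  have "sin (2*pi*real_of_int k) = 0" by (rule sin_int_2pin)
  moreover have "cos (2*pi*real_of_int k) = 1" by (rule cos_int_2pin)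
  ultimately
  show ?thesis by (simp add: sin_add)
qed

lemma sin_nonneg_cases:
  assumes "sin x \<ge> 0"
  shows "\<exists>k::int. 2*pi*k \<le> x \<and> x \<le> 2*pi*k + pi"
proof -
  define k where "k = \<lfloor>x/(2*pi)\<rfloor>"
  have k1: "of_int k \<le> x/(2*pi)" and k2: "x/(2*pi) < of_int k + 1"
    unfolding k_def by linarith+
  have "2*pi*k \<le> x" using k1 pi_gt_zero by (simp add: field_simps)
  moreover have "x < 2*pi*k + 2*pi" using k2 pi_gt_zero by (simp add: field_simps)
  moreover have "\<not> x > 2*pi*k + pi"
  proof
    assume h: "x > 2*pi*k + pi"
    have "sin (x - 2*pi*k - pi) > 0"
      using h \<open>x < 2*pi*k + 2*pi\<close> by (intro sin_gt_zero) auto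
    moreover have "sin (x - 2*pi*k - pi) = - sin x"
      using sin_shift_int[of "x - 2*pi*k - pi" k] sin_periodic_pi[of "x - 2*pi*k - pi"]
      by (smt (verit, best) sin_periodic_pi sin_shift_int)
    ultimately show False using assms by linarith
  qed
  ultimately show ?thesis by (intro exI[of _ k]) linarith
qed

lemma sin_neg_below:
  assumes "2*pi*k - pi < v" "v < 2*pi*(k::int)"
  shows "sin v < 0"
proof -
  have "sin (-(v - 2*pi*k)) > 0" using assms by (intro sin_gt_zero) auto
  moreover have "sin (v - 2*pi*k) = - sin (2*pi*k - v)" by (metis minus_diff_eq sin_minus)
  ultimately have "sin (v - 2*pi*k) < 0" by simp
  moreover have "sin (v - 2*pi*k) = sin v"
    using sin_shift_int[of "v - 2*pi*k" k] by simp
  ultimately show ?thesis by simp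
qed

lemma sin_neg_above:
  assumes "2*pi*k + pi < v" "v < 2*pi*(k::int) + 2*pi"
  shows "sin v < 0"
proof -
  have "sin (v - 2*pi*k - pi) > 0" using assms by (intro sin_gt_zero) auto
  moreover have "sin (v - 2*pi*k - pi) = - sin v"
    by (smt (verit, best) sin_periodic_pi sin_shift_int)
  ultimately show ?thesis by simp
qed

lemma halfplane:
  fixes \<theta> :: "real \<Rightarrow> real"
  assumes ab: "a \<le> b" and cont: "continuous_on {a..b} \<theta>"
    and nn: "\<forall>t\<in>{a..b}. sin (\<theta> t) \<ge> 0"
  shows "\<bar>\<theta> b - \<theta> a\<bar> \<le> pi \<and> (sin (\<theta> a) > 0 \<longrightarrow> \<bar>\<theta> b - \<theta> a\<bar> < pi)"
proof -
  obtain k::int where k: "2*pi*k \<le> \<theta> a" "\<theta> a \<le> 2*pi*k + pi"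
    using sin_nonneg_cases nn ab by fastforce
  have rng: "2*pi*k \<le> \<theta> t \<and> \<theta> t \<le> 2*pi*k + pi" if t: "t \<in> {a..b}" for t
  proof (rule ccontr)
    have ct: "continuous_on {a..t} \<theta>" by (rule continuous_on_subset[OF cont]) (use t in auto)
    assume "\<not> ?thesis"
    then consider "\<theta> t < 2*pi*k" | "\<theta> t > 2*pi*k + pi" by linarith
    then show False
    proof cases
      case 1
      define v where "v = max (\<theta> t) (2*pi*k - pi/2)"
      obtain x where x: "a \<le> x" "x \<le> t" "\<theta> x = v"
        using IVT2'[of \<theta> t v a, OF _ _ _ ct] 1 k t unfolding v_def by auto
      have "sin v < 0" unfolding v_def
        by (intro sin_neg_below[of k]) (use 1 pi_gt_zero in \<open>auto simp: less_max_iff_disj\<close>)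
      moreover have "sin (\<theta> x) \<ge> 0" using nn x t by auto
      ultimately show False using x by simp
    next
      case 2
      define v where "v = min (\<theta> t) (2*pi*k + pi + pi/2)"
      obtain x where x: "a \<le> x" "x \<le> t" "\<theta> x = v"
        using IVT'[of \<theta> a v t, OF _ _ _ ct] 2 k t unfolding v_def by auto
      have "sin v < 0" unfolding v_def
        by (intro sin_neg_above[of k]) (use 2 pi_gt_zero in \<open>auto simp: min_less_iff_disj\<close>)
      moreover have "sin (\<theta> x) \<ge> 0" using nn x t by auto
      ultimately show False using x by simp
    qed
  qed
  have rb: "2*pi*k \<le> \<theta> b \<and> \<theta> b \<le> 2*pi*k + pi" using rng ab by auto
  have strict: "2*pi*k < \<theta> a \<and> \<theta> a < 2*pi*k + pi" if "sin (\<theta> a) > 0"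
  proof -
    have "\<theta> a \<noteq> 2*pi*k"
    proof
      assume "\<theta> a = 2*pi*k"
      then have "sin (\<theta> a) = sin (0 + 2*pi*k)" by simp
      then show False using that by (simp only: sin_shift_int) simp
    qed
    moreover have "\<theta> a \<noteq> 2*pi*k + pi"
    proof
      assume "\<theta> a = 2*pi*k + pi"
      then have "sin (\<theta> a) = sin (pi + 2*pi*k)" by simp
      then show False using that by (simp only: sin_shift_int) simp
    qed
    ultimately show ?thesis using k by linarith
  qed
  show ?thesis using rb k strict by (auto simp: abs_if)
qed


lemma constsign:
  fixes \<theta> :: "real \<Rightarrow> real"
  assumes ab: "a \<le> b" and cont: "continuous_on {a..b} \<theta>"
    and nz: "\<forall>t\<in>{a<..<b}. sin (\<theta> t) \<noteq> 0"
  shows "(\<forall>t\<in>{a..b}. sin (\<theta> t) \<ge> 0) \<or> (\<forall>t\<in>{a..b}. sin (\<theta> t) \<le> 0)"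
proof (rule ccontr)
  assume "\<not> ?thesis"
  then obtain x y where x: "x \<in> {a..b}" "sin (\<theta> x) < 0" and y: "y \<in> {a..b}" "sin (\<theta> y) > 0"
    by force
  have cs: "continuous_on {a..b} (\<lambda>t. sin (\<theta> t))"
    by (intro continuous_intros cont)
  have "x \<noteq> y" using x y by auto
  then consider "x < y" | "y < x" by linarith
  then show False
  proof cases
    case 1
    have c: "continuous_on {x..y} (\<lambda>t. sin (\<theta> t))"
      by (rule continuous_on_subset[OF cs]) (use x y in auto)
    obtain z where z: "x \<le> z" "z \<le> y" "sin (\<theta> z) = 0"
      using IVT'[of "\<lambda>t. sin (\<theta> t)" x 0 y, OF _ _ _ c] x y 1 by auto
    have "z \<noteq> x" "z \<noteq> y" using z x y by auto
    then have "z \<in> {a<..<b}" using z x y by auto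
    then show False using nz z by auto
  next
    case 2
    have c: "continuous_on {y..x} (\<lambda>t. sin (\<theta> t))"
      by (rule continuous_on_subset[OF cs]) (use x y in auto)
    obtain z where z: "y \<le> z" "z \<le> x" "sin (\<theta> z) = 0"
      using IVT2'[of "\<lambda>t. sin (\<theta> t)" x 0 y, OF _ _ _ c] x y 2 by auto
    have "z \<noteq> x" "z \<noteq> y" using z x y by auto
    then have "z \<in> {a<..<b}" using z x y by auto
    then show False using nz z by auto
  qed
qed

lemma halfplane2:
  fixes \<theta> :: "real \<Rightarrow> real"
  assumes ab: "a \<le> b" and cont: "continuous_on {a..b} \<theta>"
    and nz: "\<forall>t\<in>{a<..<b}. sin (\<theta> t) \<noteq> 0"
  shows "\<bar>\<theta> b - \<theta> a\<bar> \<le> pi \<and> (sin (\<theta> a) \<noteq> 0 \<longrightarrow> \<bar>\<theta> b - \<theta> a\<bar> < pi)"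
proof -
  from constsign[OF ab cont nz] show ?thesis
  proof
    assume "\<forall>t\<in>{a..b}. sin (\<theta> t) \<ge> 0"
    with halfplane[OF ab cont] ab show ?thesis by force
  next
    assume h: "\<forall>t\<in>{a..b}. sin (\<theta> t) \<le> 0"
    have c2: "continuous_on {a..b} (\<lambda>t. - \<theta> t)" by (intro continuous_intros cont)
    have "\<forall>t\<in>{a..b}. sin (- \<theta> t) \<ge> 0" using h by simp
    from halfplane[OF ab c2 this] h ab show ?thesis by force
  qed
qed

lemma zero_start:
  fixes \<theta> :: "real \<Rightarrow> real"
  shows "\<forall>a. a \<le> b \<longrightarrow> sin (\<theta> a) = 0 \<longrightarrow> continuous_on {a..b} \<theta> \<longrightarrow>
     finite {t\<in>{a..b}. sin (\<theta> t) = 0} \<longrightarrow> card {t\<in>{a..b}. sin (\<theta> t) = 0} \<le> k \<longrightarrow>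
     \<bar>\<theta> b - \<theta> a\<bar> \<le> real k * pi"
proof (induction k)
  case 0
  show ?case
  proof (intro allI impI)
    fix a assume "a \<le> b" "sin (\<theta> a) = 0" "finite {t\<in>{a..b}. sin (\<theta> t) = 0}"
      "card {t\<in>{a..b}. sin (\<theta> t) = 0} \<le> 0"
    then show "\<bar>\<theta> b - \<theta> a\<bar> \<le> real 0 * pi" by auto
  qed
next
  case (Suc k)
  show ?case
  proof (intro allI impI)
    fix a assume ab: "a \<le> b" and za: "sin (\<theta> a) = 0" and cont: "continuous_on {a..b} \<theta>"
      and fin: "finite {t\<in>{a..b}. sin (\<theta> t) = 0}" and card: "card {t\<in>{a..b}. sin (\<theta> t) = 0} \<le> Suc k"
    define S where "S = {t\<in>{a<..b}. sin (\<theta> t) = 0}"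
    have SZ: "S \<subseteq> {t\<in>{a..b}. sin (\<theta> t) = 0} - {a}" unfolding S_def by auto
    have finS: "finite S" using SZ fin by (meson finite_Diff finite_subset)
    have cS: "card S \<le> k"
    proof -
      have "card S \<le> card ({t\<in>{a..b}. sin (\<theta> t) = 0} - {a})"
        using SZ fin by (intro card_mono) auto
      also have "\<dots> = card {t\<in>{a..b}. sin (\<theta> t) = 0} - 1"
        using ab za fin by (subst card_Diff_singleton) auto
      finally show ?thesis using card by linarith
    qed
    show "\<bar>\<theta> b - \<theta> a\<bar> \<le> real (Suc k) * pi"
    proof (cases "S = {}")
      case True
      have "\<forall>t\<in>{a<..<b}. sin (\<theta> t) \<noteq> 0" using True unfolding S_def by auto
      from halfplane2[OF ab cont this] show ?thesis
        by (smt (verit, ccfv_SIG) mult_le_cancel_right1 of_nat_0_le_iff of_nat_Suc pi_gt_zero)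
    next
      case False
      define t1 where "t1 = Min S"
      have t1S: "t1 \<in> S" unfolding t1_def using finS False by (rule Min_in)
      then have t1: "a < t1" "t1 \<le> b" "sin (\<theta> t1) = 0" unfolding S_def by auto
      have nz: "\<forall>t\<in>{a<..<t1}. sin (\<theta> t) \<noteq> 0"
      proof
        fix t assume t: "t \<in> {a<..<t1}"
        show "sin (\<theta> t) \<noteq> 0"
        proof
          assume "sin (\<theta> t) = 0"
          then have "t \<in> S" unfolding S_def using t t1 by auto
          then have "t1 \<le> t" unfolding t1_def using finS by simp
          then show False using t by auto
        qed
      qed
      have c1: "continuous_on {a..t1} \<theta>" by (rule continuous_on_subset[OF cont]) (use t1 in auto)
      have c2: "continuous_on {t1..b} \<theta>" by (rule continuous_on_subset[OF cont]) (use t1 in auto)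
      have sub: "{t\<in>{t1..b}. sin (\<theta> t) = 0} \<subseteq> S" unfolding S_def using t1 by auto
      have fin2: "finite {t\<in>{t1..b}. sin (\<theta> t) = 0}" using sub finS by (rule finite_subset)
      have card2: "card {t\<in>{t1..b}. sin (\<theta> t) = 0} \<le> k"
        using card_mono[OF finS sub] cS by linarith
      have h2: "\<bar>\<theta> b - \<theta> t1\<bar> \<le> real k * pi"
        using Suc.IH t1 c2 fin2 card2 by blast
      have h1: "\<bar>\<theta> t1 - \<theta> a\<bar> \<le> pi" using halfplane2[OF _ c1 nz] t1 by auto
      show ?thesis using h1 h2 by (simp add: algebra_simps)
    qed
  qed
qed

lemma nonzero_start:
  fixes \<theta> :: "real \<Rightarrow> real"
  assumes ab: "a \<le> b" and na: "sin (\<theta> a) \<noteq> 0" and cont: "continuous_on {a..b} \<theta>"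
    and fin: "finite {t\<in>{a..b}. sin (\<theta> t) = 0}" and card: "card {t\<in>{a..b}. sin (\<theta> t) = 0} \<le> k"
  shows "\<bar>\<theta> b - \<theta> a\<bar> < (real k + 1) * pi"
proof (cases "{t\<in>{a..b}. sin (\<theta> t) = 0} = {}")
  case True
  have "\<forall>t\<in>{a<..<b}. sin (\<theta> t) \<noteq> 0" using True by auto
  from halfplane2[OF ab cont this] na show ?thesis
    by (smt (verit) mult_le_cancel_right1 of_nat_0_le_iff pi_gt_zero)
next
  case False
  define S where "S = {t\<in>{a..b}. sin (\<theta> t) = 0}"
  define t1 where "t1 = Min S"
  have t1S: "t1 \<in> S" unfolding t1_def using fin False S_def by (intro Min_in) auto
  then have t1: "a \<le> t1" "t1 \<le> b" "sin (\<theta> t1) = 0" unfolding S_def by auto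
  have nz: "\<forall>t\<in>{a<..<t1}. sin (\<theta> t) \<noteq> 0"
  proof
    fix t assume t: "t \<in> {a<..<t1}"
    show "sin (\<theta> t) \<noteq> 0"
    proof
      assume "sin (\<theta> t) = 0"
      then have "t \<in> S" unfolding S_def using t t1 by auto
      then have "t1 \<le> t" unfolding t1_def using fin S_def by simp
      then show False using t by auto
    qed
  qed
  have c1: "continuous_on {a..t1} \<theta>" by (rule continuous_on_subset[OF cont]) (use t1 in auto)
  have c2: "continuous_on {t1..b} \<theta>" by (rule continuous_on_subset[OF cont]) (use t1 in auto)
  have sub: "{t\<in>{t1..b}. sin (\<theta> t) = 0} \<subseteq> S" unfolding S_def using t1 by auto
  have fin2: "finite {t\<in>{t1..b}. sin (\<theta> t) = 0}" using sub fin S_def by (metis finite_subset)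
  have card2: "card {t\<in>{t1..b}. sin (\<theta> t) = 0} \<le> k"
    using card_mono[OF _ sub] fin card S_def by fastforce
  have h2: "\<bar>\<theta> b - \<theta> t1\<bar> \<le> real k * pi"
    using zero_start[of b \<theta> k] t1 c2 fin2 card2 by blast
  have h1: "\<bar>\<theta> t1 - \<theta> a\<bar> < pi" using halfplane2[OF _ c1 nz] t1 na by auto
  show ?thesis using h1 h2 by (simp add: algebra_simps)
qed

lemma winding_bound:
  fixes \<theta> :: "real \<Rightarrow> real" and m :: nat
  assumes m: "m \<ge> 1" and cont: "continuous_on {0..1} \<theta>"
    and zs: "(\<forall>t\<in>{0..1}. sin (\<theta> t) = 0) \<or>
      (finite {t\<in>{0..1}. sin (\<theta> t) = 0} \<and> card {t\<in>{0..1}. sin (\<theta> t) = 0} \<le> m)"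
  shows "\<theta> 1 - \<theta> 0 < (real m + 1) * pi"
  using zs
proof
  assume "\<forall>t\<in>{0..1}. sin (\<theta> t) = 0"
  then have "\<forall>t\<in>{0<..<1::real}. sin (\<theta> t) = 0" by auto
  have "\<forall>t\<in>{0..1}. sin (\<theta> t) \<ge> 0" using \<open>\<forall>t\<in>{0..1}. sin (\<theta> t) = 0\<close> by auto
  from halfplane[OF _ cont this] have "\<bar>\<theta> 1 - \<theta> 0\<bar> \<le> pi" by simp
  moreover have "pi < (real m + 1) * pi" using m pi_gt_zero by simp
  ultimately show ?thesis by linarith
next
  assume h: "finite {t\<in>{0..1}. sin (\<theta> t) = 0} \<and> card {t\<in>{0..1}. sin (\<theta> t) = 0} \<le> m"
  show ?thesis
  proof (cases "sin (\<theta> 0) = 0")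
    case True
    have "\<bar>\<theta> 1 - \<theta> 0\<bar> \<le> real m * pi" using zero_start[of 1 \<theta> m] True cont h by auto
    moreover have "(real m + 1) * pi = real m * pi + pi" by (simp add: distrib_right)
    ultimately show ?thesis using pi_gt_zero by linarith
  next
    case False
    have "\<bar>\<theta> 1 - \<theta> 0\<bar> < (real m + 1) * pi" using nonzero_start[OF _ False cont, of m] h by auto
    then show ?thesis by linarith
  qed
qed


lemma Im_poly_real: "Im (poly P (complex_of_real t)) = poly (map_poly Im P) t"
  by (induction P) (simp_all add: map_poly_pCons)

lemma lift_unique:
  fixes \<psi>1 \<psi>2 :: "real \<Rightarrow> real"
  assumes c1: "continuous_on {0..1} \<psi>1" and c2: "continuous_on {0..1} \<psi>2"
    and eq: "\<forall>t\<in>{0..1}. cis (\<psi>1 t) = cis (\<psi>2 t)"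
  shows "\<psi>1 1 - \<psi>1 0 = \<psi>2 1 - \<psi>2 0"
proof -
  define h where "h t = (\<psi>1 t - \<psi>2 t) / (2*pi)" for t
  have hint: "h t \<in> \<int>" if "t \<in> {0..1}" for t
  proof -
    have "cis (\<psi>1 t - \<psi>2 t) = 1" using eq that by (simp add: cis_divide[symmetric])
    then have "Re (cis (\<psi>1 t - \<psi>2 t)) = 1" by simp
    then have "cos (\<psi>1 t - \<psi>2 t) = 1" by simp
    then obtain n::int where "\<psi>1 t - \<psi>2 t = of_int n * 2 * pi" using cos_one_2pi_int by blast
    then have "h t = of_int n" unfolding h_def by simp
    then show ?thesis by simp
  qed
  have ch: "continuous_on {0..1} h" unfolding h_def by (intro continuous_intros c1 c2) auto
  have "h constant_on {0..1}"
  proof (rule continuous_discrete_range_constant[OF _ ch])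
    show "connected {0..1::real}" by simp
    fix x :: real assume x: "x \<in> {0..1}"
    show "\<exists>e>0. \<forall>y. y \<in> {0..1} \<and> h y \<noteq> h x \<longrightarrow> e \<le> norm (h y - h x)"
    proof (intro exI[of _ 1] conjI allI impI)
      fix y assume y: "y \<in> {0..1} \<and> h y \<noteq> h x"
      obtain a b where "h y = of_int a" "h x = of_int b" using hint x y by (metis Ints_cases)
      then show "1 \<le> norm (h y - h x)" using y by auto
    qed simp
  qed
  then have "h 1 = h 0" unfolding constant_on_def by force
  then show ?thesis unfolding h_def using pi_gt_zero by (simp add: divide_simps)
qed

lemma Im_of_real_mult: "Im (complex_of_real r * z) = r * Im z"
  by simp

theorem lemma5p1:
  fixes s e :: complex and f :: "complex poly" and g :: "complex \<Rightarrow> complex" and m :: nat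
  assumes "s \<noteq> e"
    and "m \<ge> 1"
    and "degree f \<le> m"
    and "continuous_on (closed_segment s e) g"
    and "\<exists>c::complex. c \<noteq> 0 \<and> (\<forall>z\<in>closed_segment s e. \<exists>r::real. g z = of_real r * c)"
    and "\<forall>z\<in>closed_segment s e. poly f z + g z \<noteq> 0"
  shows "seg_winding (\<lambda>z. poly f z + g z) s e < (real m + 1) / 2"
proof -
  note se = assms(1) and m = assms(2) and deg = assms(3) and cg = assms(4) and nz = assms(6)
  obtain c where c: "c \<noteq> 0" and gr: "\<forall>z\<in>closed_segment s e. \<exists>r::real. g z = of_real r * c"
    using assms(5) by blast
  define F where "F t = poly f (linepath s e t) + g (linepath s e t)" for t
  define u where "u t = F t / complex_of_real (norm (F t))" for t
  have lin: "linepath s e t \<in> closed_segment s e" if "t \<in> {0..1}" for t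
    using linepath_image_01 that by blast
  have Fnz: "F t \<noteq> 0" if "t \<in> {0..1}" for t using nz lin[OF that] unfolding F_def by auto
  have cF: "continuous_on {0..1} F"
  proof -
    have "continuous_on {0..1} (\<lambda>t. g (linepath s e t))"
      by (rule continuous_on_compose2[OF cg]) (auto intro: continuous_intros lin)
    then show ?thesis unfolding F_def by (intro continuous_intros)
  qed
  have cu: "continuous_on {0..1} u" unfolding u_def
    by (intro continuous_intros cF) (use Fnz in auto)
  have unz: "u t \<noteq> 0" if "t \<in> {0..1}" for t using Fnz[OF that] unfolding u_def by auto
  have unorm: "norm (u t) = 1" if "t \<in> {0..1}" for t using Fnz[OF that] unfolding u_def
    by (simp add: norm_divide)
  obtain G where cG: "continuous_on {0..1} G" and G: "\<And>t. t \<in> {0..1} \<Longrightarrow> u t = exp (G t)"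
    using continuous_logarithm_on_contractible[OF cu convex_imp_contractible[OF convex_real_interval(5)] unz]
    by metis
  define \<psi>0 where "\<psi>0 t = Im (G t)" for t
  have c\<psi>0: "continuous_on {0..1} \<psi>0" unfolding \<psi>0_def by (intro continuous_intros cG)
  have u\<psi>0: "u t = cis (\<psi>0 t)" if "t \<in> {0..1}" for t
  proof -
    have "exp (Re (G t)) = 1" using unorm[OF that] G[OF that] by simp
    then have "Re (G t) = 0" by simp
    then have "G t = \<i> * complex_of_real (\<psi>0 t)" unfolding \<psi>0_def by (simp add: complex_eq_iff)
    then show ?thesis using G[OF that] by (simp add: cis_conv_exp)
  qed
  define P where "P = seg_winding (\<lambda>z. poly f z + g z) s e"
  define w0 where "w0 = (\<psi>0 1 - \<psi>0 0) / (2 * pi)"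
  have lift0: "\<forall>t\<in>{0..1}. (\<lambda>z. poly f z + g z) (linepath s e t) /
      complex_of_real (norm ((\<lambda>z. poly f z + g z) (linepath s e t))) = cis (\<psi>0 t)"
    using u\<psi>0 unfolding u_def F_def by auto
  have "seg_winding (\<lambda>z. poly f z + g z) s e = w0"
    unfolding seg_winding_def
  proof (rule the_equality)
    show "\<exists>\<psi>. continuous_on {0..1} \<psi> \<and> (\<forall>t\<in>{0..1}. (\<lambda>z. poly f z + g z) (linepath s e t) /
      complex_of_real (norm ((\<lambda>z. poly f z + g z) (linepath s e t))) = cis (\<psi> t)) \<and>
      w0 = (\<psi> 1 - \<psi> 0) / (2 * pi)"
      using c\<psi>0 lift0 w0_def by blast
  next
    fix w assume "\<exists>\<psi>. continuous_on {0..1} \<psi> \<and> (\<forall>t\<in>{0..1}. (\<lambda>z. poly f z + g z) (linepath s e t) /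
      complex_of_real (norm ((\<lambda>z. poly f z + g z) (linepath s e t))) = cis (\<psi> t)) \<and>
      w = (\<psi> 1 - \<psi> 0) / (2 * pi)"
    then obtain \<psi> where c\<psi>: "continuous_on {0..1} \<psi>" and l: "\<forall>t\<in>{0..1}. (\<lambda>z. poly f z + g z) (linepath s e t) /
      complex_of_real (norm ((\<lambda>z. poly f z + g z) (linepath s e t))) = cis (\<psi> t)"
      and w: "w = (\<psi> 1 - \<psi> 0) / (2 * pi)" by blast
    have "\<forall>t\<in>{0..1}. cis (\<psi> t) = cis (\<psi>0 t)" using l lift0 by auto
    from lift_unique[OF c\<psi> c\<psi>0 this] show "w = w0" using w w0_def by simp
  qed
  moreover have "w0 < (real m + 1) / 2"
  proof -
    define \<theta> where "\<theta> t = \<psi>0 t - Arg c" for t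
    have c\<theta>: "continuous_on {0..1} \<theta>" unfolding \<theta>_def by (intro continuous_intros c\<psi>0)
    define PP where "PP = smult (inverse c) (f \<circ>\<^sub>p [:s, e - s:])"
    define Q where "Q = map_poly Im PP"
    have degQ: "degree Q \<le> m"
    proof -
      have "degree Q \<le> degree PP" unfolding Q_def by (rule map_poly_degree_leq)
      also have "\<dots> \<le> degree (f \<circ>\<^sub>p [:s, e - s:])" unfolding PP_def by (rule degree_smult_le)
      also have "\<dots> = degree f" using se by (simp add: degree_pcompose)
      finally show ?thesis using deg by linarith
    qed
    have key: "sin (\<theta> t) = (norm c / norm (F t)) * poly Q t" if t: "t \<in> {0..1}" for t
    proof -
      obtain r::real where r: "g (linepath s e t) = of_real r * c" using gr lin[OF t] by blast
      have lp: "linepath s e t = s + complex_of_real t * (e - s)"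
        by (simp add: linepath_def scaleR_conv_of_real algebra_simps)
      have F1: "F t = poly f (s + complex_of_real t * (e - s)) + of_real r * c"
        unfolding F_def using r lp by simp
      have P1: "poly PP (complex_of_real t) = poly f (s + complex_of_real t * (e - s)) / c"
        unfolding PP_def by (simp add: poly_pcompose field_simps)
      have FP: "F t / c = poly PP (complex_of_real t) + of_real r"
        unfolding F1 P1 using c by (simp add: field_simps)
      have "cis (\<theta> t) = u t / sgn c" unfolding \<theta>_def using u\<psi>0[OF t] c
        by (simp add: cis_divide[symmetric] cis_Arg)
      also have "\<dots> = complex_of_real (norm c / norm (F t)) * (F t / c)"
        unfolding u_def using c Fnz[OF t] by (simp add: sgn_div_norm scaleR_conv_of_real field_simps)
      finally have "Im (cis (\<theta> t)) = Im (complex_of_real (norm c / norm (F t)) * (F t / c))"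
        by simp
      then have "sin (\<theta> t) = Im (complex_of_real (norm c / norm (F t)) * (F t / c))"
        by simp
      also have "\<dots> = (norm c / norm (F t)) * Im (F t / c)"
        by (rule Im_of_real_mult)
      also have "Im (F t / c) = poly Q t" unfolding FP Q_def by (simp add: Im_poly_real)
      finally show ?thesis .
    qed
    have zeq: "sin (\<theta> t) = 0 \<longleftrightarrow> poly Q t = 0" if "t \<in> {0..1}" for t
      using key[OF that] c Fnz[OF that] by simp
    have zs: "(\<forall>t\<in>{0..1}. sin (\<theta> t) = 0) \<or>
      (finite {t\<in>{0..1}. sin (\<theta> t) = 0} \<and> card {t\<in>{0..1}. sin (\<theta> t) = 0} \<le> m)"
    proof (cases "Q = 0")
      case True then show ?thesis using zeq by auto
    next
      case False
      have sub: "{t\<in>{0..1}. sin (\<theta> t) = 0} \<subseteq> {t. poly Q t = 0}" using zeq by auto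
      have fin: "finite {t. poly Q t = 0}" using poly_roots_finite[OF False] .
      have "card {t\<in>{0..1}. sin (\<theta> t) = 0} \<le> card {t. poly Q t = 0}" by (rule card_mono[OF fin sub])
      also have "\<dots> \<le> degree Q" by (rule card_poly_roots_bound[OF False])
      finally show ?thesis using degQ finite_subset[OF sub fin] by auto
    qed
    have "\<theta> 1 - \<theta> 0 < (real m + 1) * pi" by (rule winding_bound[OF m c\<theta> zs])
    then have "\<psi>0 1 - \<psi>0 0 < (real m + 1) * pi" unfolding \<theta>_def by simp
    then show ?thesis unfolding w0_def using pi_gt_zero by (simp add: field_simps)
  qed
  ultimately show ?thesis by simp
qed

end
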